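(* Let $c_v>\frac12$, let $\varrho_\pm,p_\pm>0$, $v_\pm\in\mathbb{R}$ be Riemann data (for the one-dimensional full Euler system in the variable $x_2$, with states $(\varrho_-,v_-,p_-)$ for $x_2<0$ and $(\varrho_+,v_+,p_+)$ for $x_2>0$) whose 1D Riemann solution consists of a 1-shock, possibly a 2-contact discontinuity, and a 3-shock, with intermediate states $(\varrho_{M-},v_M,p_M)$, $(\varrho_{M+},v_M,p_M)$ and shock speeds $\sigma_-,\sigma_+$, and assume $v_M=0$. Define for $\varepsilon\in\mathbb{R}$ $A(\varepsilon)=\varrho_-(\varrho_{M-}+\varepsilon)(\varrho_{M+}-\varepsilon-\varrho_+)-\varrho_+(\varrho_{M+}-\varepsilon)(\varrho_{M-}+\varepsilon-\varrho_-)$, $B(\varepsilon)=\varrho_-\varrho_+(\varrho_{M-}+\varepsilon)(\varrho_{M+}-\varepsilon)(v_--v_+)^2-(p_--p_+)A(\varepsilon)$, $D(\varepsilon)=v_-\varrho_-(\varrho_{M-}+\varepsilon)(\varrho_{M+}-\varepsilon-\varrho_+)-v_+\varrho_+(\varrho_{M+}-\varepsilon)(\varrho_{M-}+\varepsilon-\varrho_-)$, let $\varepsilon_{\max}>0$ be such that $A(\varepsilon)\ne0$, $B(\varepsilon)>0$, $\varrho_{M+}-\varepsilon-\varrho_+>0$ and $\varrho_{M-}+\varepsilon-\varrho_->0$ for all $\varepsilon\in(0,\varepsilon_{\max}]$, and for $\varepsilon\in(0,\varepsilon_{\max}]$ define $\mu_0(\varepsilon)=\frac{1}{A(\varepsilon)}\Big[D(\varepsilon)+\varrho_-\varrho_+(\varrho_{M+}-\varepsilon)(v_--v_+)-\sqrt{(\varrho_{M-}+\varepsilon)^2\frac{\varrho_{M+}-\varepsilon-\varrho_+}{\varrho_{M-}+\varepsilon-\varrho_-}B(\varepsilon)}\Big]$,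 $\mu_1(\varepsilon)=\frac{1}{A(\varepsilon)}\Big[D(\varepsilon)-\sqrt{(\varrho_{M-}+\varepsilon-\varrho_-)(\varrho_{M+}-\varepsilon-\varrho_+)B(\varepsilon)}\Big]$, $\mu_2(\varepsilon)=\frac{1}{A(\varepsilon)}\Big[D(\varepsilon)+\varrho_-\varrho_+(\varrho_{M-}+\varepsilon)(v_--v_+)-\sqrt{(\varrho_{M+}-\varepsilon)^2\frac{\varrho_{M-}+\varepsilon-\varrho_-}{\varrho_{M+}-\varepsilon-\varrho_+}B(\varepsilon)}\Big]$. Then $\lim_{\varepsilon\to0}\mu_0(\varepsilon)=\sigma_-$, $\lim_{\varepsilon\to0}\mu_1(\varepsilon)=v_M$ and $\lim_{\varepsilon\to0}\mu_2(\varepsilon)=\sigma_+$.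
   Context: The one-dimensional full Euler system for an ideal gas is $\partial_t\varrho+\partial_2(\varrho v)=0$, $\partial_t(\varrho v)+\partial_2(\varrho v^2+p)=0$, $\partial_t(\frac12\varrho v^2+c_vp)+\partial_2[(\frac12\varrho v^2+(c_v+1)p)v]=0$. The 1D Riemann solution is its unique self-similar BV solution with the given Riemann data, consisting of a 1-wave, a (possibly absent) 2-contact discontinuity traveling with speed $v_M$, and a 3-wave, separated by constant states. In the case considered the 1-wave is an admissible shock connecting $(\varrho_-,v_-,p_-)$ to $(\varrho_{M-},v_M,p_M)$ with speed $\sigma_-$, and the 3-wave an admissible shock connecting $(\varrho_{M+},v_M,p_M)$ to $(\varrho_+,v_+,p_+)$ with speed $\sigma_+$; the Rankine–Hugoniot conditions hold, in particular $\sigma_\pm(\varrho_\pm-\varrho_{M\pm})=\varrho_\pm v_\pm-\varrho_{M\pm}v_M$. It is known that $p_M>\max\{p_-,p_+\}$, $\varrho_{M\pm}>\varrho_\pm$. The paper shows such an $\varepsilon_{\max}$ exists. *)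

theory Defs
  imports Complex_Main
begin

definition energy :: "real \<Rightarrow> real \<Rightarrow> real \<Rightarrow> real \<Rightarrow> real" where
  "energy cv rho v p = rho * v^2 / 2 + cv * p"

text \<open>Sound speed, with adiabatic exponent gamma = (c_v + 1)/c_v.\<close>
definition sound_speed :: "real \<Rightarrow> real \<Rightarrow> real \<Rightarrow> real" where
  "sound_speed cv rho p = sqrt (((cv + 1) / cv) * p / rho)"

definition RH :: "real \<Rightarrow> real \<Rightarrow> real \<Rightarrow> real \<Rightarrow> real \<Rightarrow> real \<Rightarrow> real \<Rightarrow> real \<Rightarrow> bool" where
  "RH cv s rL vL pL rR vR pR \<longleftrightarrow>
     s * (rL - rR) = rL * vL - rR * vR \<and>
     s * (rL * vL - rR * vR) = (rL * vL^2 + pL) - (rR * vR^2 + pR) \<and>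
     s * (energy cv rL vL pL - energy cv rR vR pR)
       = (energy cv rL vL pL + pL) * vL - (energy cv rR vR pR + pR) * vR"

definition adm_1shock :: "real \<Rightarrow> real \<Rightarrow> real \<Rightarrow> real \<Rightarrow> real \<Rightarrow> real \<Rightarrow> real \<Rightarrow> real \<Rightarrow> bool" where
  "adm_1shock cv s rL vL pL rR vR pR \<longleftrightarrow> RH cv s rL vL pL rR vR pR \<and>
     vR - sound_speed cv rR pR < s \<and> s < vL - sound_speed cv rL pL"

definition adm_3shock :: "real \<Rightarrow> real \<Rightarrow> real \<Rightarrow> real \<Rightarrow> real \<Rightarrow> real \<Rightarrow> real \<Rightarrow> real \<Rightarrow> bool" where
  "adm_3shock cv s rL vL pL rR vR pR \<longleftrightarrow> RH cv s rL vL pL rR vR pR \<and>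
     vR + sound_speed cv rR pR < s \<and> s < vL + sound_speed cv rL pL"

definition Afun :: "real \<Rightarrow> real \<Rightarrow> real \<Rightarrow> real \<Rightarrow> real \<Rightarrow> real" where
  "Afun rm rp rMm rMp e =
     rm * (rMm + e) * (rMp - e - rp) - rp * (rMp - e) * (rMm + e - rm)"

definition Bfun :: "real \<Rightarrow> real \<Rightarrow> real \<Rightarrow> real \<Rightarrow> real \<Rightarrow> real \<Rightarrow> real \<Rightarrow> real \<Rightarrow> real \<Rightarrow> real" where
  "Bfun rm vm pm rp vp pp rMm rMp e =
     rm * rp * (rMm + e) * (rMp - e) * (vm - vp)^2 - (pm - pp) * Afun rm rp rMm rMp e"

definition Dfun :: "real \<Rightarrow> real \<Rightarrow> real \<Rightarrow> real \<Rightarrow> real \<Rightarrow> real \<Rightarrow> real \<Rightarrow> real" where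
  "Dfun rm vm rp vp rMm rMp e =
     vm * rm * (rMm + e) * (rMp - e - rp) - vp * rp * (rMp - e) * (rMm + e - rm)"

definition mu0 :: "real \<Rightarrow> real \<Rightarrow> real \<Rightarrow> real \<Rightarrow> real \<Rightarrow> real \<Rightarrow> real \<Rightarrow> real \<Rightarrow> real \<Rightarrow> real" where
  "mu0 rm vm pm rp vp pp rMm rMp e =
     (Dfun rm vm rp vp rMm rMp e + rm * rp * (rMp - e) * (vm - vp)
      - sqrt ((rMm + e)^2 * ((rMp - e - rp) / (rMm + e - rm)) * Bfun rm vm pm rp vp pp rMm rMp e))
     / Afun rm rp rMm rMp e"

definition mu1 :: "real \<Rightarrow> real \<Rightarrow> real \<Rightarrow> real \<Rightarrow> real \<Rightarrow> real \<Rightarrow> real \<Rightarrow> real \<Rightarrow> real \<Rightarrow> real" where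
  "mu1 rm vm pm rp vp pp rMm rMp e =
     (Dfun rm vm rp vp rMm rMp e
      - sqrt ((rMm + e - rm) * (rMp - e - rp) * Bfun rm vm pm rp vp pp rMm rMp e))
     / Afun rm rp rMm rMp e"

definition mu2 :: "real \<Rightarrow> real \<Rightarrow> real \<Rightarrow> real \<Rightarrow> real \<Rightarrow> real \<Rightarrow> real \<Rightarrow> real \<Rightarrow> real \<Rightarrow> real" where
  "mu2 rm vm pm rp vp pp rMm rMp e =
     (Dfun rm vm rp vp rMm rMp e + rm * rp * (rMm + e) * (vm - vp)
      - sqrt ((rMp - e)^2 * ((rMm + e - rm) / (rMp - e - rp)) * Bfun rm vm pm rp vp pp rMm rMp e))
     / Afun rm rp rMm rMp e"

end

theory Submission
  imports Defs
begin


lemma id0: assumes "M+e-a \<noteq> 0" shows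
 "(M+e-a)^2 * ((Dfun a vm b vp M N e + a*b*(N-e)*(vm-vp))^2 - (M+e)^2*((N-e-b)/(M+e-a))*Bfun a vm pm b vp pp M N e)
  = Afun a b M N e * (2*(M+e)*(M+e-a)*vm*(b*(N-e)*(M+e-a))*(vm-vp) + (M+e-a)^2*vm^2*Afun a b M N e
     - (M+e)^2*(b*(N-e)*(M+e-a))*(vm-vp)^2 + (M+e-a)*(M+e)^2*(N-e-b)*(pm-pp))"
proof -
  have h: "(M+e-a)^2 * ((M+e)^2*((N-e-b)/(M+e-a))*Bfun a vm pm b vp pp M N e) = (M+e-a)*(M+e)^2*(N-e-b)*Bfun a vm pm b vp pp M N e"
    using assms by (simp add: power2_eq_square)
  have "(M+e-a)^2 * ((Dfun a vm b vp M N e + a*b*(N-e)*(vm-vp))^2 - (M+e)^2*((N-e-b)/(M+e-a))*Bfun a vm pm b vp pp M N e)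
    = (M+e-a)^2 * (Dfun a vm b vp M N e + a*b*(N-e)*(vm-vp))^2 - (M+e-a)*(M+e)^2*(N-e-b)*Bfun a vm pm b vp pp M N e"
    by (metis right_diff_distrib h)
  also have "\<dots> = Afun a b M N e * (2*(M+e)*(M+e-a)*vm*(b*(N-e)*(M+e-a))*(vm-vp) + (M+e-a)^2*vm^2*Afun a b M N e
     - (M+e)^2*(b*(N-e)*(M+e-a))*(vm-vp)^2 + (M+e-a)*(M+e)^2*(N-e-b)*(pm-pp))"
    unfolding Dfun_def Bfun_def Afun_def by algebra
  finally show ?thesis .
qed

lemma id2: assumes "N-e-b \<noteq> 0" shows
 "(N-e-b)^2 * ((Dfun a vm b vp M N e + a*b*(M+e)*(vm-vp))^2 - (N-e)^2*((M+e-a)/(N-e-b))*Bfun a vm pm b vp pp M N e)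
  = Afun a b M N e * ((N-e)^2*(vm-vp)^2*(a*(M+e)*(N-e-b)) + 2*(N-e)*(vm-vp)*(N-e-b)*vp*(a*(M+e)*(N-e-b))
     + (N-e-b)^2*vp^2*Afun a b M N e + (N-e)^2*(M+e-a)*(N-e-b)*(pm-pp))"
proof -
  have h: "(N-e-b)^2 * ((N-e)^2*((M+e-a)/(N-e-b))*Bfun a vm pm b vp pp M N e) = (N-e-b)*(N-e)^2*(M+e-a)*Bfun a vm pm b vp pp M N e"
    using assms by (simp add: power2_eq_square)
  have "(N-e-b)^2 * ((Dfun a vm b vp M N e + a*b*(M+e)*(vm-vp))^2 - (N-e)^2*((M+e-a)/(N-e-b))*Bfun a vm pm b vp pp M N e)
    = (N-e-b)^2 * (Dfun a vm b vp M N e + a*b*(M+e)*(vm-vp))^2 - (N-e-b)*(N-e)^2*(M+e-a)*Bfun a vm pm b vp pp M N e"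
    by (metis right_diff_distrib h)
  also have "\<dots> = Afun a b M N e * ((N-e)^2*(vm-vp)^2*(a*(M+e)*(N-e-b)) + 2*(N-e)*(vm-vp)*(N-e-b)*vp*(a*(M+e)*(N-e-b))
     + (N-e-b)^2*vp^2*Afun a b M N e + (N-e)^2*(M+e-a)*(N-e-b)*(pm-pp))"
    unfolding Dfun_def Bfun_def Afun_def by algebra
  finally show ?thesis .
qed


lemma root_lim:
  fixes Nz R A C k :: "real \<Rightarrow> real"
  assumes ev: "eventually (\<lambda>e. A e \<noteq> 0 \<and> R e \<ge> 0 \<and> k e \<noteq> 0 \<and> k e * ((Nz e)^2 - R e) = A e * C e) (at_right 0)"
    and cN: "isCont Nz 0" and cR: "isCont R 0" and cC: "isCont C 0" and ck: "isCont k 0"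
    and pos: "Nz 0 > 0" "k 0 \<noteq> 0"
  shows "((\<lambda>e. (Nz e - sqrt (R e)) / A e) \<longlongrightarrow> C 0 / (k 0 * (Nz 0 + sqrt (R 0)))) (at_right 0)"
proof -
  define g where "g e = C e / (k e * (Nz e + sqrt (R e)))" for e
  have "Nz 0 + sqrt (R 0) \<noteq> 0"
  proof -
    have "(Nz \<longlongrightarrow> Nz 0) (at 0)" using cN isCont_def by blast
    have "R 0 \<ge> 0"
    proof (rule tendsto_lowerbound)
      show "(R \<longlongrightarrow> R 0) (at_right 0)" using cR filterlim_at_split isCont_def by blast
      show "\<forall>\<^sub>F x in at_right 0. 0 \<le> R x" using ev by (rule eventually_mono) auto
    qed simp
    then show ?thesis using pos by (smt (verit) real_sqrt_ge_zero)
  qed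
  then have cg: "isCont g 0" unfolding g_def using pos cN cR cC ck
    by (intro continuous_intros) auto
  have "(g \<longlongrightarrow> g 0) (at_right 0)" using cg filterlim_at_split isCont_def by blast
  moreover have "eventually (\<lambda>e. Nz e > 0) (at_right 0)"
  proof -
    have "(Nz \<longlongrightarrow> Nz 0) (at_right 0)" using cN filterlim_at_split isCont_def by blast
    then show ?thesis using pos(1) order_tendstoD(1) by blast
  qed
  ultimately have "(g \<longlongrightarrow> g 0) (at_right 0) \<and> eventually (\<lambda>e. Nz e > 0) (at_right 0)" by blast
  moreover have "eventually (\<lambda>e. g e = (Nz e - sqrt (R e)) / A e) (at_right 0)"
    using ev calculation
  proof -
    have "eventually (\<lambda>e. (A e \<noteq> 0 \<and> R e \<ge> 0 \<and> k e \<noteq> 0 \<and> k e * ((Nz e)^2 - R e) = A e * C e) \<and> Nz e > 0) (at_right 0)"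
      using ev calculation eventually_conj by blast
    then show ?thesis
    proof (rule eventually_mono)
      fix e assume h: "(A e \<noteq> 0 \<and> R e \<ge> 0 \<and> k e \<noteq> 0 \<and> k e * ((Nz e)^2 - R e) = A e * C e) \<and> Nz e > 0"
      have s: "sqrt (R e) ^ 2 = R e" using h by simp
      have p: "Nz e + sqrt (R e) > 0" using h by (smt (verit) real_sqrt_ge_zero)
      have "C e * A e = k e * ((Nz e - sqrt (R e)) * (Nz e + sqrt (R e)))"
        using h s by (simp add: algebra_simps power2_eq_square)
      then have q: "C e * A e = (Nz e - sqrt (R e)) * (k e * (Nz e + sqrt (R e)))"
        by (simp add: algebra_simps)
      have kp: "k e * (Nz e + sqrt (R e)) \<noteq> 0" using h p by simp
      show "g e = (Nz e - sqrt (R e)) / A e" unfolding g_def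
        using frac_eq_eq[OF kp, of "A e" "C e" "Nz e - sqrt (R e)"] h q by simp
    qed
  qed
  ultimately show ?thesis unfolding g_def using Lim_transform_eventually by fastforce
qed

definition C1f :: "real \<Rightarrow> real \<Rightarrow> real \<Rightarrow> real \<Rightarrow> real \<Rightarrow> real \<Rightarrow> real \<Rightarrow> real \<Rightarrow> real \<Rightarrow> real" where "C1f a vm pm b vp pp M N e =
  vm^2*a*(M+e)*(N-e-b) - vp^2*b*(N-e)*(M+e-a) + (M+e-a)*(N-e-b)*(pm-pp)"

definition C0f :: "real \<Rightarrow> real \<Rightarrow> real \<Rightarrow> real \<Rightarrow> real \<Rightarrow> real \<Rightarrow> real \<Rightarrow> real \<Rightarrow> real \<Rightarrow> real" where "C0f a vm pm b vp pp M N e =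
  2*(M+e)*(M+e-a)*vm*(b*(N-e)*(M+e-a))*(vm-vp) + (M+e-a)^2*vm^2*Afun a b M N e
     - (M+e)^2*(b*(N-e)*(M+e-a))*(vm-vp)^2 + (M+e-a)*(M+e)^2*(N-e-b)*(pm-pp)"

definition C2f :: "real \<Rightarrow> real \<Rightarrow> real \<Rightarrow> real \<Rightarrow> real \<Rightarrow> real \<Rightarrow> real \<Rightarrow> real \<Rightarrow> real \<Rightarrow> real" where "C2f a vm pm b vp pp M N e =
  (N-e)^2*(vm-vp)^2*(a*(M+e)*(N-e-b)) + 2*(N-e)*(vm-vp)*(N-e-b)*vp*(a*(M+e)*(N-e-b))
     + (N-e-b)^2*vp^2*Afun a b M N e + (N-e)^2*(M+e-a)*(N-e-b)*(pm-pp)"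

lemma contD[continuous_intros]: "isCont (\<lambda>e. Dfun a vm b vp M N e) x"
  unfolding Dfun_def by (intro continuous_intros)
lemma contA[continuous_intros]: "isCont (\<lambda>e. Afun a b M N e) x"
  unfolding Afun_def by (intro continuous_intros)
lemma contB[continuous_intros]: "isCont (\<lambda>e. Bfun a vm pm b vp pp M N e) x"
  unfolding Bfun_def by (intro continuous_intros)
lemma contC1[continuous_intros]: "isCont (\<lambda>e. C1f a vm pm b vp pp M N e) x"
  unfolding C1f_def by (intro continuous_intros)
lemma contC0[continuous_intros]: "isCont (\<lambda>e. C0f a vm pm b vp pp M N e) x"
  unfolding C0f_def by (intro continuous_intros)
lemma contC2[continuous_intros]: "isCont (\<lambda>e. C2f a vm pm b vp pp M N e) x"
  unfolding C2f_def by (intro continuous_intros)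

lemma id1: "1 * ((Dfun a vm b vp M N e)^2 - (M+e-a)*(N-e-b)*Bfun a vm pm b vp pp M N e)
  = Afun a b M N e * C1f a vm pm b vp pp M N e"
  unfolding C1f_def Dfun_def Bfun_def Afun_def by algebra

lemma val:
  fixes k N0 R A C x :: real
  assumes "k \<noteq> 0" "k*(N0^2 - R) = A*C" "C = k*x*(2*N0 - x*A)" "N0 - x*A > 0" "N0 > 0"
  shows "C/(k*(N0 + sqrt R)) = x"
proof -
  have "k*(N0^2 - R) = k*(x*A*(2*N0 - x*A))" using assms(2,3) by (simp add: algebra_simps)
  then have "N0^2 - R = x*A*(2*N0 - x*A)" using assms(1) by simp
  then have "R = N0^2 - x*A*(2*N0 - x*A)" by linarith
  then have "R = (N0 - x*A)^2" by (simp add: power2_eq_square algebra_simps)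
  then have "sqrt R = N0 - x*A" using assms(4) by simp
  then have "N0 + sqrt R = 2*N0 - x*A" by simp
  moreover have "2*N0 - x*A > 0" using assms by simp
  ultimately show ?thesis using assms(1,3) by simp
qed


theorem proposition5p2:
  fixes cv rm vm pm rp vp pp rMm rMp vM pM sm sp emax :: real
  assumes cv: "cv > 1/2"
    and data: "rm > 0" "pm > 0" "rp > 0" "pp > 0"
    and shock1: "adm_1shock cv sm rm vm pm rMm vM pM"
    and shock3: "adm_3shock cv sp rMp vM pM rp vp pp"
    and known: "pM > max pm pp" "rMm > rm" "rMp > rp"
    and vM0: "vM = 0"
    and emax: "emax > 0"
    and eps: "\<And>e. e \<in> {0<..emax} \<Longrightarrow>
                 Afun rm rp rMm rMp e \<noteq> 0 \<and> Bfun rm vm pm rp vp pp rMm rMp e > 0 \<and>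
                 rMp - e - rp > 0 \<and> rMm + e - rm > 0"
  shows "((\<lambda>e. mu0 rm vm pm rp vp pp rMm rMp e) \<longlongrightarrow> sm) (at_right 0) \<and>
         ((\<lambda>e. mu1 rm vm pm rp vp pp rMm rMp e) \<longlongrightarrow> vM) (at_right 0) \<and>
         ((\<lambda>e. mu2 rm vm pm rp vp pp rMm rMp e) \<longlongrightarrow> sp) (at_right 0)"
  
proof -
  have pM: "pM > 0" using known data by simp
  have ss: "sound_speed cv r p \<ge> 0" if "r > 0" "p > 0" for r p
    unfolding sound_speed_def using that cv by simp
  from shock1 vM0 have e1: "sm*(rm - rMm) = rm*vm" and e2: "sm*(rm*vm) = (rm*vm^2+pm) - pM"
    and l1: "sm < vm - sound_speed cv rm pm"
    unfolding adm_1shock_def RH_def by auto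
  from shock3 vM0 have e3: "sp*(rMp - rp) = - rp*vp" and e4: "sp*(- rp*vp) = pM - (rp*vp^2+pp)"
    and l3: "vp + sound_speed cv rp pp < sp"
    unfolding adm_3shock_def RH_def by auto
  have "sm < vm" using l1 ss[of rm pm] data by linarith
  then have "rm*sm < rm*vm" using data by simp
  then have "sm*rMm < 0" using e1 by (simp add: algebra_simps)
  then have smn: "sm < 0" using known data by (simp add: mult_less_0_iff)
  have "vp < sp" using l3 ss[of rp pp] data by linarith
  then have "rp*vp < rp*sp" using data by simp
  then have "sp*rMp > 0" using e3 by (simp add: algebra_simps)
  then have spp: "sp > 0" using known data by (simp add: zero_less_mult_iff)
  have vm_eq: "vm = sm*(rm - rMm)/rm" using e1 data by (simp add: field_simps)
  have vp_eq: "vp = sp*(rp - rMp)/rp" using e3 data by (simp add: field_simps)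
  have "pm = pM + sm*(rm*vm) - rm*vm^2" using e2 by (simp add: algebra_simps)
  also have "\<dots> = pM - sm^2*rMm*(rMm-rm)/rm" unfolding vm_eq using data
    by (simp add: field_simps power2_eq_square)
  finally have pm_eq: "pm = pM - sm^2*rMm*(rMm-rm)/rm" .
  have "pp = pM + sp*(rp*vp) - rp*vp^2" using e4 by (simp add: algebra_simps)
  also have "\<dots> = pM - sp^2*rMp*(rMp-rp)/rp" unfolding vp_eq using data
    by (simp add: field_simps power2_eq_square)
  finally have pp_eq: "pp = pM - sp^2*rMp*(rMp-rp)/rp" .
  have evE: "eventually (\<lambda>e. e \<in> {0<..emax}) (at_right (0::real))"
    unfolding eventually_at_right_field using emax by (intro exI[of _ emax]) auto
  have smM: "sm*rMm < 0" using smn known data by (simp add: mult_neg_pos)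
  have spN: "sp*rMp > 0" using spp known data by simp
  have q1: "sm*(rMm-rm)*rp < 0" using smn known data by (simp add: mult_neg_pos)
  have q2: "sp*(rMp-rp)*rm > 0" using spp known data by simp
  have D0: "Dfun rm vm rp vp rMm rMp 0 = (rMm-rm)*(rMp-rp)*(sp*rMp - sm*rMm)"
    unfolding Dfun_def vm_eq vp_eq using data by (simp add: field_simps)
  have D0p: "Dfun rm vm rp vp rMm rMp 0 > 0" unfolding D0 using known smM spN by simp
  have L1: "((\<lambda>e. mu1 rm vm pm rp vp pp rMm rMp e) \<longlongrightarrow> vM) (at_right 0)"
  proof -
    have "((\<lambda>e. (Dfun rm vm rp vp rMm rMp e - sqrt ((rMm + e - rm) * (rMp - e - rp) * Bfun rm vm pm rp vp pp rMm rMp e))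
        / Afun rm rp rMm rMp e) \<longlongrightarrow> C1f rm vm pm rp vp pp rMm rMp 0 / (1 * (Dfun rm vm rp vp rMm rMp 0
          + sqrt ((rMm + 0 - rm) * (rMp - 0 - rp) * Bfun rm vm pm rp vp pp rMm rMp 0)))) (at_right 0)"
    proof (rule root_lim[where Nz="\<lambda>e. Dfun rm vm rp vp rMm rMp e"
        and R="\<lambda>e. (rMm + e - rm) * (rMp - e - rp) * Bfun rm vm pm rp vp pp rMm rMp e"
        and A="\<lambda>e. Afun rm rp rMm rMp e" and k="\<lambda>e. 1" and C="\<lambda>e. C1f rm vm pm rp vp pp rMm rMp e"])
      show "\<forall>\<^sub>F e in at_right 0. Afun rm rp rMm rMp e \<noteq> 0 \<and>
         0 \<le> (rMm + e - rm) * (rMp - e - rp) * Bfun rm vm pm rp vp pp rMm rMp e \<and>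
         (1::real) \<noteq> 0 \<and>
         1 * ((Dfun rm vm rp vp rMm rMp e)\<^sup>2 - (rMm + e - rm) * (rMp - e - rp) * Bfun rm vm pm rp vp pp rMm rMp e) =
         Afun rm rp rMm rMp e * C1f rm vm pm rp vp pp rMm rMp e"
        apply (rule eventually_mono[OF evE])
        subgoal for e using eps[of e] id1[of rm vm rp vp rMm rMp e pm pp]
          by (simp add: order_less_imp_le)
        done
    qed (auto simp: D0p intro!: continuous_intros)
    moreover have "C1f rm vm pm rp vp pp rMm rMp 0 = 0"
      unfolding C1f_def vm_eq vp_eq pm_eq pp_eq using data by (simp add: field_simps; algebra)
    ultimately show ?thesis unfolding mu1_def vM0 by simp
  qed
  have L0: "((\<lambda>e. mu0 rm vm pm rp vp pp rMm rMp e) \<longlongrightarrow> sm) (at_right 0)"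
  proof -
    have N0e: "Dfun rm vm rp vp rMm rMp 0 + rm * rp * (rMp - 0) * (vm - vp) = (rMm-rm)*(rMp-rp)*(sp*rMp - sm*rMm) + rMp*(sp*(rMp-rp)*rm - sm*(rMm-rm)*rp)"
      unfolding Dfun_def vm_eq vp_eq using data by (simp add: field_simps; algebra)
    have N0p: "Dfun rm vm rp vp rMm rMp 0 + rm * rp * (rMp - 0) * (vm - vp) > 0" unfolding N0e using known data smM spN q1 q2
      by (intro add_pos_pos mult_pos_pos) auto
    have N0x: "Dfun rm vm rp vp rMm rMp 0 + rm * rp * (rMp - 0) * (vm - vp) - sm*Afun rm rp rMm rMp 0 = rMm*(rMp-rp)*(sp*rMp - sm*rMm)"
      unfolding Dfun_def Afun_def vm_eq vp_eq using data by (simp add: field_simps; algebra)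
    have N0xp: "Dfun rm vm rp vp rMm rMp 0 + rm * rp * (rMp - 0) * (vm - vp) - sm*Afun rm rp rMm rMp 0 > 0" unfolding N0x using known data smM spN
      by (intro mult_pos_pos) auto
    have vC: "C0f rm vm pm rp vp pp rMm rMp 0 = (rMm + 0 - rm)\<^sup>2*sm*(2*(Dfun rm vm rp vp rMm rMp 0 + rm * rp * (rMp - 0) * (vm - vp)) - sm*Afun rm rp rMm rMp 0)"
      unfolding C0f_def Afun_def Dfun_def vm_eq vp_eq pm_eq pp_eq using data
      by (simp add: field_simps; algebra)
    have val0: "C0f rm vm pm rp vp pp rMm rMp 0 / ((rMm + 0 - rm)\<^sup>2 * (Dfun rm vm rp vp rMm rMp 0 + rm * rp * (rMp - 0) * (vm - vp) + sqrt ((rMm + 0)\<^sup>2 * ((rMp - 0 - rp) / (rMm + 0 - rm)) * Bfun rm vm pm rp vp pp rMm rMp 0))) = sm"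
      by (rule val[OF _ id0[where e=0 and a=rm and b=rp and M=rMm and N=rMp and vm=vm and vp=vp and pm=pm and pp=pp, folded C0f_def] vC N0xp N0p]) (use known data in auto)
    have "((\<lambda>e. (Dfun rm vm rp vp rMm rMp e + rm * rp * (rMp - e) * (vm - vp) - sqrt ((rMm + e)\<^sup>2 * ((rMp - e - rp) / (rMm + e - rm)) * Bfun rm vm pm rp vp pp rMm rMp e)) / Afun rm rp rMm rMp e) \<longlongrightarrow>
        C0f rm vm pm rp vp pp rMm rMp 0 / ((rMm + 0 - rm)\<^sup>2 * (Dfun rm vm rp vp rMm rMp 0 + rm * rp * (rMp - 0) * (vm - vp) + sqrt ((rMm + 0)\<^sup>2 * ((rMp - 0 - rp) / (rMm + 0 - rm)) * Bfun rm vm pm rp vp pp rMm rMp 0)))) (at_right 0)"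
    proof (rule root_lim[where Nz="\<lambda>e. Dfun rm vm rp vp rMm rMp e + rm * rp * (rMp - e) * (vm - vp)"
        and R="\<lambda>e. (rMm + e)\<^sup>2 * ((rMp - e - rp) / (rMm + e - rm)) * Bfun rm vm pm rp vp pp rMm rMp e"
        and A="\<lambda>e. Afun rm rp rMm rMp e" and k="\<lambda>e. (rMm + e - rm)\<^sup>2" and C="\<lambda>e. C0f rm vm pm rp vp pp rMm rMp e"])
      show "\<forall>\<^sub>F e in at_right 0. Afun rm rp rMm rMp e \<noteq> 0 \<and>
         0 \<le> (rMm + e)\<^sup>2 * ((rMp - e - rp) / (rMm + e - rm)) * Bfun rm vm pm rp vp pp rMm rMp e \<and> (rMm + e - rm)\<^sup>2 \<noteq> 0 \<and>
         (rMm + e - rm)\<^sup>2 * ((Dfun rm vm rp vp rMm rMp e + rm * rp * (rMp - e) * (vm - vp))\<^sup>2 - ((rMm + e)\<^sup>2 * ((rMp - e - rp) / (rMm + e - rm)) * Bfun rm vm pm rp vp pp rMm rMp e)) = Afun rm rp rMm rMp e * C0f rm vm pm rp vp pp rMm rMp e"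
        apply (rule eventually_mono[OF evE])
        subgoal for e using eps[of e] id0[where e=e and a=rm and b=rp and M=rMm and N=rMp and vm=vm and vp=vp and pm=pm and pp=pp, folded C0f_def]
          by (simp add: order_less_imp_le)
        done
    qed (use known data N0p in \<open>auto intro!: continuous_intros\<close>)
    then show ?thesis unfolding mu0_def val0 .
  qed
  have L2: "((\<lambda>e. mu2 rm vm pm rp vp pp rMm rMp e) \<longlongrightarrow> sp) (at_right 0)"
  proof -
    have N0e: "Dfun rm vm rp vp rMm rMp 0 + rm * rp * (rMm + 0) * (vm - vp) = (rMm-rm)*(rMp-rp)*(sp*rMp - sm*rMm) + rMm*(sp*(rMp-rp)*rm - sm*(rMm-rm)*rp)"
      unfolding Dfun_def vm_eq vp_eq using data by (simp add: field_simps; algebra)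
    have N0p: "Dfun rm vm rp vp rMm rMp 0 + rm * rp * (rMm + 0) * (vm - vp) > 0" unfolding N0e using known data smM spN q1 q2
      by (intro add_pos_pos mult_pos_pos) auto
    have N0x: "Dfun rm vm rp vp rMm rMp 0 + rm * rp * (rMm + 0) * (vm - vp) - sp*Afun rm rp rMm rMp 0 = rMp*(rMm-rm)*(sp*rMp - sm*rMm)"
      unfolding Dfun_def Afun_def vm_eq vp_eq using data by (simp add: field_simps; algebra)
    have N0xp: "Dfun rm vm rp vp rMm rMp 0 + rm * rp * (rMm + 0) * (vm - vp) - sp*Afun rm rp rMm rMp 0 > 0" unfolding N0x using known data smM spN
      by (intro mult_pos_pos) auto
    have vC: "C2f rm vm pm rp vp pp rMm rMp 0 = (rMp - 0 - rp)\<^sup>2*sp*(2*(Dfun rm vm rp vp rMm rMp 0 + rm * rp * (rMm + 0) * (vm - vp)) - sp*Afun rm rp rMm rMp 0)"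
      unfolding C2f_def Afun_def Dfun_def vm_eq vp_eq pm_eq pp_eq using data
      by (simp add: field_simps; algebra)
    have val0: "C2f rm vm pm rp vp pp rMm rMp 0 / ((rMp - 0 - rp)\<^sup>2 * (Dfun rm vm rp vp rMm rMp 0 + rm * rp * (rMm + 0) * (vm - vp) + sqrt ((rMp - 0)\<^sup>2 * ((rMm + 0 - rm) / (rMp - 0 - rp)) * Bfun rm vm pm rp vp pp rMm rMp 0))) = sp"
      by (rule val[OF _ id2[where e=0 and a=rm and b=rp and M=rMm and N=rMp and vm=vm and vp=vp and pm=pm and pp=pp, folded C2f_def] vC N0xp N0p]) (use known data in auto)
    have "((\<lambda>e. (Dfun rm vm rp vp rMm rMp e + rm * rp * (rMm + e) * (vm - vp) - sqrt ((rMp - e)\<^sup>2 * ((rMm + e - rm) / (rMp - e - rp)) * Bfun rm vm pm rp vp pp rMm rMp e)) / Afun rm rp rMm rMp e) \<longlongrightarrow>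
        C2f rm vm pm rp vp pp rMm rMp 0 / ((rMp - 0 - rp)\<^sup>2 * (Dfun rm vm rp vp rMm rMp 0 + rm * rp * (rMm + 0) * (vm - vp) + sqrt ((rMp - 0)\<^sup>2 * ((rMm + 0 - rm) / (rMp - 0 - rp)) * Bfun rm vm pm rp vp pp rMm rMp 0)))) (at_right 0)"
    proof (rule root_lim[where Nz="\<lambda>e. Dfun rm vm rp vp rMm rMp e + rm * rp * (rMm + e) * (vm - vp)"
        and R="\<lambda>e. (rMp - e)\<^sup>2 * ((rMm + e - rm) / (rMp - e - rp)) * Bfun rm vm pm rp vp pp rMm rMp e"
        and A="\<lambda>e. Afun rm rp rMm rMp e" and k="\<lambda>e. (rMp - e - rp)\<^sup>2" and C="\<lambda>e. C2f rm vm pm rp vp pp rMm rMp e"])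
      show "\<forall>\<^sub>F e in at_right 0. Afun rm rp rMm rMp e \<noteq> 0 \<and>
         0 \<le> (rMp - e)\<^sup>2 * ((rMm + e - rm) / (rMp - e - rp)) * Bfun rm vm pm rp vp pp rMm rMp e \<and> (rMp - e - rp)\<^sup>2 \<noteq> 0 \<and>
         (rMp - e - rp)\<^sup>2 * ((Dfun rm vm rp vp rMm rMp e + rm * rp * (rMm + e) * (vm - vp))\<^sup>2 - ((rMp - e)\<^sup>2 * ((rMm + e - rm) / (rMp - e - rp)) * Bfun rm vm pm rp vp pp rMm rMp e)) = Afun rm rp rMm rMp e * C2f rm vm pm rp vp pp rMm rMp e"
        apply (rule eventually_mono[OF evE])
        subgoal for e using eps[of e] id2[where e=e and a=rm and b=rp and M=rMm and N=rMp and vm=vm and vp=vp and pm=pm and pp=pp, folded C2f_def]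
          by (simp add: order_less_imp_le)
        done
    qed (use known data N0p in \<open>auto intro!: continuous_intros\<close>)
    then show ?thesis unfolding mu2_def val0 .
  qed
  show ?thesis using L0 L1 L2 by blast
qed

end
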